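(* Let $Y$ be a Young diagram with row lengths $a_1\ge\cdots\ge a_m\ge0$, let $P\subseteq (C\times S)\cup(R\times S)\cup(R\times C)$, and let $1\le i<j\le a_1$. Let $P'=\phi_{c_i,c_j}(P)$. Then (1) $|P'|=|P|$, and (2) if $P$ is a 2-cover of $H(Y)$, then so is $P'$.
   Context: $H(Y)$ has vertex sides $R=\{r_1,\dots,r_m\}$, $C=\{c_1,\dots,c_{a_1}\}$, $S=\{s_1,\dots,s_{a_1}\}$ and edges $\{r_\ell,c_a,s_b\}$ for $1\le\ell\le m$, $1\le a,b\le a_\ell$. For disjoint $A,B$, $A\times B$ is the set of pairs $\{x,y\}$ with $x\in A,y\in B$. A 2-cover of $H(Y)$ is a set of pairs such that every edge of $H(Y)$ contains one of them. Given $P$, let $Q=P\cap(C\times S)$, $W=P\cap(R\times C)$, $N_Q(c)=\{s\in S: cs\in Q\}$, $N_W(c)=\{r\in R: rc\in W\}$, and for an integer $t$ let $L_t=\{r_\ell\in R: a_\ell<t\}$. The shifting $\phi_{c_i,c_j}(P)$ (for $i<j$) is obtained from $P$ by deleting all pairs of $P$ containing $c_i$ or $c_j$ and adding the pairs $\{c_i\}\times(N_Q(c_i)\cup N_Q(c_j))$, $\{c_j\}\times(N_Q(c_i)\cap N_Q(c_j))$, $\{c_i\}\times\big(N_W(c_i)\cap(N_W(c_j)\cup L_j)\big)$, and $\{c_j\}\times\big(N_W(c_j)\cup(N_W(c_i)\setminus L_j)\big)$. *)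

theory Defs
  imports Main
begin

text \<open>Vertices of H(Y): r_l, c_a, s_b (indices start at 1).\<close>
datatype vertex = Rv nat | Cv nat | Sv nat

definition Rset :: "nat \<Rightarrow> vertex set" where
  "Rset m = Rv ` {1..m}"

definition Cset :: "(nat \<Rightarrow> nat) \<Rightarrow> vertex set" where
  "Cset a = Cv ` {1..a 1}"

definition Sset :: "(nat \<Rightarrow> nat) \<Rightarrow> vertex set" where
  "Sset a = Sv ` {1..a 1}"

text \<open>A \<times> B as the set of unordered pairs {x,y} with x in A, y in B.\<close>
definition pairs :: "vertex set \<Rightarrow> vertex set \<Rightarrow> vertex set set" where
  "pairs A B = {{x, y} | x y. x \<in> A \<and> y \<in> B}"

definition HY_edges :: "nat \<Rightarrow> (nat \<Rightarrow> nat) \<Rightarrow> vertex set set" where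
  "HY_edges m a = {{Rv l, Cv x, Sv y} | l x y.
      1 \<le> l \<and> l \<le> m \<and> 1 \<le> x \<and> x \<le> a l \<and> 1 \<le> y \<and> y \<le> a l}"

definition two_cover :: "nat \<Rightarrow> (nat \<Rightarrow> nat) \<Rightarrow> vertex set set \<Rightarrow> bool" where
  "two_cover m a P \<longleftrightarrow> (\<forall>e \<in> HY_edges m a. \<exists>p \<in> P. p \<subseteq> e)"

definition NQ :: "(nat \<Rightarrow> nat) \<Rightarrow> vertex set set \<Rightarrow> vertex \<Rightarrow> vertex set" where
  "NQ a P c = {s \<in> Sset a. {c, s} \<in> P \<inter> pairs (Cset a) (Sset a)}"

definition NW :: "nat \<Rightarrow> (nat \<Rightarrow> nat) \<Rightarrow> vertex set set \<Rightarrow> vertex \<Rightarrow> vertex set" where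
  "NW m a P c = {r \<in> Rset m. {r, c} \<in> P \<inter> pairs (Rset m) (Cset a)}"

definition Lt :: "nat \<Rightarrow> (nat \<Rightarrow> nat) \<Rightarrow> nat \<Rightarrow> vertex set" where
  "Lt m a t = {Rv l | l. 1 \<le> l \<and> l \<le> m \<and> a l < t}"

definition shift :: "nat \<Rightarrow> (nat \<Rightarrow> nat) \<Rightarrow> nat \<Rightarrow> nat \<Rightarrow> vertex set set \<Rightarrow> vertex set set" where
  "shift m a i j P =
     {p \<in> P. Cv i \<notin> p \<and> Cv j \<notin> p}
     \<union> pairs {Cv i} (NQ a P (Cv i) \<union> NQ a P (Cv j))
     \<union> pairs {Cv j} (NQ a P (Cv i) \<inter> NQ a P (Cv j))
     \<union> pairs {Cv i} (NW m a P (Cv i) \<inter> (NW m a P (Cv j) \<union> Lt m a j))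
     \<union> pairs {Cv j} (NW m a P (Cv j) \<union> (NW m a P (Cv i) - Lt m a j))"

end

theory Submission
  imports Defs
begin

lemma pairs_single: "pairs {c} X = (\<lambda>x. {c, x}) ` X"
  unfolding pairs_def by auto

lemma pairs_single_Un: "pairs {c} X \<union> pairs {c} Y = pairs {c} (X \<union> Y)"
  unfolding pairs_single by auto

lemma card_pairs_single:
  assumes "c \<notin> X" shows "card (pairs {c} X) = card X"
proof -
  have "inj_on (\<lambda>x. {c, x}) X" using assms by (auto simp: inj_on_def doubleton_eq_iff)
  then show ?thesis unfolding pairs_single by (simp add: card_image)
qed

lemma finite_pairs: "finite A \<Longrightarrow> finite B \<Longrightarrow> finite (pairs A B)"
proof -
  assume "finite A" "finite B"
  moreover have "pairs A B = (\<lambda>(x,y). {x,y}) ` (A \<times> B)" unfolding pairs_def by auto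
  ultimately show ?thesis by simp
qed

lemma fin_sets: "finite (Rset m)" "finite (Cset a)" "finite (Sset a)"
  by (auto simp: Rset_def Cset_def Sset_def)

lemma decomp:
  assumes P_sub: "P \<subseteq> pairs (Cset a) (Sset a) \<union> pairs (Rset m) (Sset a) \<union> pairs (Rset m) (Cset a)"
    and ci: "Cv i \<in> Cset a"
  shows "{p \<in> P. Cv i \<in> p} = pairs {Cv i} (NQ a P (Cv i) \<union> NW m a P (Cv i))"
proof
  show "{p \<in> P. Cv i \<in> p} \<subseteq> pairs {Cv i} (NQ a P (Cv i) \<union> NW m a P (Cv i))"
  proof
    fix p assume p: "p \<in> {p \<in> P. Cv i \<in> p}"
    then have pP: "p \<in> P" and cp: "Cv i \<in> p" by auto
    have "p \<in> pairs (Cset a) (Sset a) \<union> pairs (Rset m) (Sset a) \<union> pairs (Rset m) (Cset a)"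
      using pP P_sub by blast
    then consider (CS) x y where "x \<in> Cset a" "y \<in> Sset a" "p = {x,y}"
      | (RS) x y where "x \<in> Rset m" "y \<in> Sset a" "p = {x,y}"
      | (RC) x y where "x \<in> Rset m" "y \<in> Cset a" "p = {x,y}"
      unfolding pairs_def by blast
    then show "p \<in> pairs {Cv i} (NQ a P (Cv i) \<union> NW m a P (Cv i))"
    proof cases
      case CS
      then have "x = Cv i" using cp by (auto simp: Sset_def)
      then have "y \<in> NQ a P (Cv i)" using CS pP ci unfolding pairs_def NQ_def by blast
      then show ?thesis using CS \<open>x = Cv i\<close> unfolding pairs_def by blast
    next
      case RS then show ?thesis using cp by (auto simp: Sset_def Rset_def)
    next
      case RC
      then have "y = Cv i" using cp by (auto simp: Rset_def)
      then have "x \<in> NW m a P (Cv i)" using RC pP ci unfolding pairs_def NW_def by blast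
      then show ?thesis using RC \<open>y = Cv i\<close> unfolding pairs_def by blast
    qed
  qed
next
  show "pairs {Cv i} (NQ a P (Cv i) \<union> NW m a P (Cv i)) \<subseteq> {p \<in> P. Cv i \<in> p}"
  proof
    fix p assume "p \<in> pairs {Cv i} (NQ a P (Cv i) \<union> NW m a P (Cv i))"
    then obtain y where y: "p = {Cv i, y}" "y \<in> NQ a P (Cv i) \<or> y \<in> NW m a P (Cv i)"
      unfolding pairs_def by blast
    then have "p \<in> P" unfolding NQ_def NW_def by (auto simp: insert_commute)
    then show "p \<in> {p \<in> P. Cv i \<in> p}" using y by blast
  qed
qed

lemma NQ_sub: "NQ a P c \<subseteq> Sset a" unfolding NQ_def by auto
lemma NW_sub: "NW m a P c \<subseteq> Rset m" unfolding NW_def by auto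

lemma RS_disj: "Rset m \<inter> Sset a = {}" "Cv i \<notin> Rset m" "Cv i \<notin> Sset a"
  by (auto simp: Rset_def Sset_def)

theorem lemma3:
  fixes m :: nat and a :: "nat \<Rightarrow> nat" and P :: "vertex set set" and i j :: nat
  assumes young: "\<And>l l'. 1 \<le> l \<Longrightarrow> l \<le> l' \<Longrightarrow> l' \<le> m \<Longrightarrow> a l' \<le> a l"
    and P_sub: "P \<subseteq> pairs (Cset a) (Sset a) \<union> pairs (Rset m) (Sset a) \<union> pairs (Rset m) (Cset a)"
    and ij: "1 \<le> i" "i < j" "j \<le> a 1"
  shows "card (shift m a i j P) = card P
         \<and> (two_cover m a P \<longrightarrow> two_cover m a (shift m a i j P))"
proof -
  define Qi where "Qi = NQ a P (Cv i)"
  define Qj where "Qj = NQ a P (Cv j)"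
  define Wi where "Wi = NW m a P (Cv i)"
  define Wj where "Wj = NW m a P (Cv j)"
  define L where "L = Lt m a j"
  define K where "K = {p \<in> P. Cv i \<notin> p \<and> Cv j \<notin> p}"
  have ci: "Cv i \<in> Cset a" and cj: "Cv j \<in> Cset a" using ij by (auto simp: Cset_def)
  have Di: "{p \<in> P. Cv i \<in> p} = pairs {Cv i} (Qi \<union> Wi)"
    unfolding Qi_def Wi_def by (rule decomp[OF P_sub ci])
  have Dj: "{p \<in> P. Cv j \<in> p} = pairs {Cv j} (Qj \<union> Wj)"
    unfolding Qj_def Wj_def by (rule decomp[OF P_sub cj])
  have fQ: "finite Qi" "finite Qj" "Qi \<subseteq> Sset a" "Qj \<subseteq> Sset a"
    unfolding Qi_def Qj_def using NQ_sub fin_sets by (meson finite_subset)+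
  have fW: "finite Wi" "finite Wj" "Wi \<subseteq> Rset m" "Wj \<subseteq> Rset m"
    unfolding Wi_def Wj_def using NW_sub fin_sets by (meson finite_subset)+
  have finP: "finite P"
    using P_sub by (rule finite_subset) (simp add: finite_pairs fin_sets)
  have cne: "Cv i \<noteq> Cv j" using ij by simp
  have sh: "shift m a i j P = K \<union> pairs {Cv i} ((Qi \<union> Qj) \<union> (Wi \<inter> (Wj \<union> L)))
                 \<union> pairs {Cv j} ((Qi \<inter> Qj) \<union> (Wj \<union> (Wi - L)))"
    unfolding shift_def K_def Qi_def Qj_def Wi_def Wj_def L_def pairs_single_Un[symmetric]
    by blast
  have PK: "P = K \<union> {p \<in> P. Cv i \<in> p} \<union> {p \<in> P. Cv j \<in> p}" unfolding K_def by blast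
  have RSd: "Rset m \<inter> Sset a = {}" by (rule RS_disj)
  have noci: "Cv i \<notin> Rset m" "Cv i \<notin> Sset a" "Cv j \<notin> Rset m" "Cv j \<notin> Sset a"
    using RS_disj by auto
  have card_gen: "card (K \<union> pairs {Cv i} X \<union> pairs {Cv j} Y) = card K + card X + card Y"
    if X: "X \<subseteq> Rset m \<union> Sset a" and Y: "Y \<subseteq> Rset m \<union> Sset a" for X Y
  proof -
    have fK: "finite K" using finP unfolding K_def by simp
    have fX: "finite X" "finite Y" using X Y fin_sets by (auto intro: finite_subset)
    have fpX: "finite (pairs {Cv i} X)" "finite (pairs {Cv j} Y)"
      using fX by (auto simp: pairs_single)
    have d1: "K \<inter> pairs {Cv i} X = {}" unfolding K_def pairs_single by auto
    have d2: "(K \<union> pairs {Cv i} X) \<inter> pairs {Cv j} Y = {}"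
      using X Y noci cne unfolding K_def pairs_single by (auto simp: doubleton_eq_iff)
    have "card (K \<union> pairs {Cv i} X \<union> pairs {Cv j} Y) = card (K \<union> pairs {Cv i} X) + card (pairs {Cv j} Y)"
      using d2 fK fpX by (simp add: card_Un_disjoint)
    also have "\<dots> = card K + card (pairs {Cv i} X) + card (pairs {Cv j} Y)"
      using d1 fK fpX by (simp add: card_Un_disjoint)
    also have "\<dots> = card K + card X + card Y"
      using X Y noci by (simp add: card_pairs_single subset_eq) (metis card_pairs_single Un_iff subsetD)
    finally show ?thesis .
  qed
  have c1: "card (shift m a i j P) = card K + card ((Qi \<union> Qj) \<union> (Wi \<inter> (Wj \<union> L)))
       + card ((Qi \<inter> Qj) \<union> (Wj \<union> (Wi - L)))"
    unfolding sh using fQ fW by (intro card_gen) auto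
  have c2: "card P = card K + card (Qi \<union> Wi) + card (Qj \<union> Wj)"
    apply (subst PK) unfolding Di Dj using fQ fW by (intro card_gen) auto
  have dQW: "\<And>X Y. X \<subseteq> Sset a \<Longrightarrow> Y \<subseteq> Rset m \<Longrightarrow> X \<inter> Y = {}" using RSd by blast
  have e1: "card ((Qi \<union> Qj) \<union> (Wi \<inter> (Wj \<union> L))) = card (Qi \<union> Qj) + card (Wi \<inter> (Wj \<union> L))"
    apply (rule card_Un_disjoint) using fQ fW dQW[of "Qi \<union> Qj" "Wi \<inter> (Wj \<union> L)"] by auto
  have e2: "card ((Qi \<inter> Qj) \<union> (Wj \<union> (Wi - L))) = card (Qi \<inter> Qj) + card (Wj \<union> (Wi - L))"
    apply (rule card_Un_disjoint) using fQ fW dQW[of "Qi \<inter> Qj" "Wj \<union> (Wi - L)"] by auto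
  have e3: "card (Qi \<union> Wi) = card Qi + card Wi"
    apply (rule card_Un_disjoint) using fQ fW dQW[of Qi Wi] by auto
  have e4: "card (Qj \<union> Wj) = card Qj + card Wj"
    apply (rule card_Un_disjoint) using fQ fW dQW[of Qj Wj] by auto
  have q: "card (Qi \<union> Qj) + card (Qi \<inter> Qj) = card Qi + card Qj"
    using fQ(1,2) by (rule card_Un_Int[symmetric])
  have w0: "card (Wi \<inter> (Wj \<union> L) \<union> (Wj \<union> (Wi - L))) + card (Wi \<inter> (Wj \<union> L) \<inter> (Wj \<union> (Wi - L)))
     = card (Wi \<inter> (Wj \<union> L)) + card (Wj \<union> (Wi - L))"
    using fW by (intro card_Un_Int[symmetric]) auto
  have wu: "Wi \<inter> (Wj \<union> L) \<union> (Wj \<union> (Wi - L)) = Wi \<union> Wj" by blast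
  have wi: "Wi \<inter> (Wj \<union> L) \<inter> (Wj \<union> (Wi - L)) = Wi \<inter> Wj" by blast
  have w1: "card (Wi \<union> Wj) + card (Wi \<inter> Wj) = card Wi + card Wj"
    using fW(1,2) by (rule card_Un_Int[symmetric])
  have w: "card (Wi \<inter> (Wj \<union> L)) + card (Wj \<union> (Wi - L)) = card Wi + card Wj"
    using w0 w1 unfolding wu wi by linarith
  have card_ok: "card (shift m a i j P) = card P"
    using c1 c2 e1 e2 e3 e4 q w by linarith
  have cover_ok: "two_cover m a (shift m a i j P)" if tc: "two_cover m a P"
    unfolding two_cover_def
  proof
    fix e assume e: "e \<in> HY_edges m a"
    then obtain l x y where lxy: "e = {Rv l, Cv x, Sv y}" "1 \<le> l" "l \<le> m" "1 \<le> x" "x \<le> a l"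
      "1 \<le> y" "y \<le> a l" unfolding HY_edges_def by blast
    have rR: "Rv l \<in> Rset m" using lxy by (auto simp: Rset_def)
    have cov: "\<exists>p\<in>P. p \<subseteq> {Rv l, Cv z, Sv y}" if "1 \<le> z" "z \<le> a l" for z
      using tc that lxy unfolding two_cover_def HY_edges_def by blast
    have inQ: "Sv y \<in> NQ a P (Cv z)" if "{Cv z, Sv y} \<in> P" "Cv z \<in> Cset a" for z
    proof -
      have "{Cv z, Sv y} \<in> pairs (Cset a) (Sset a) \<union> pairs (Rset m) (Sset a) \<union> pairs (Rset m) (Cset a)"
        using that P_sub by blast
      then have "Sv y \<in> Sset a" unfolding pairs_def by (auto simp: doubleton_eq_iff Rset_def Cset_def)
      then show ?thesis using that unfolding NQ_def pairs_def by blast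
    qed
    have inW: "Rv l \<in> NW m a P (Cv z)" if "{Rv l, Cv z} \<in> P" "Cv z \<in> Cset a" for z
      using that rR unfolding NW_def pairs_def by blast
    have sub_cases: "p = {Rv l, Sv y} \<or> p = {Cv z, Sv y} \<or> p = {Rv l, Cv z}"
      if "p \<in> P" "p \<subseteq> {Rv l, Cv z, Sv y}" for p z
    proof -
      from that P_sub obtain u v where "p = {u,v}" "u \<noteq> v"
        unfolding pairs_def by (auto simp: Rset_def Cset_def Sset_def)
      then show ?thesis using that(2) by (auto simp: insert_commute)
    qed
    have LL: "Rv l \<in> L \<longleftrightarrow> a l < j" unfolding L_def Lt_def using lxy by auto
    have memK: "\<exists>p\<in>shift m a i j P. p \<subseteq> e" if "p \<in> K" "p \<subseteq> e" for p
      using that unfolding sh by blast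
    have memI: "\<exists>p\<in>shift m a i j P. p \<subseteq> e"
      if "v \<in> (Qi \<union> Qj) \<union> (Wi \<inter> (Wj \<union> L))" "{Cv i, v} \<subseteq> e" for v
    proof -
      have "{Cv i, v} \<in> pairs {Cv i} ((Qi \<union> Qj) \<union> (Wi \<inter> (Wj \<union> L)))"
        using that(1) unfolding pairs_def by blast
      then have "{Cv i, v} \<in> shift m a i j P" unfolding sh by blast
      then show ?thesis using that(2) by blast
    qed
    have memJ: "\<exists>p\<in>shift m a i j P. p \<subseteq> e"
      if "v \<in> (Qi \<inter> Qj) \<union> (Wj \<union> (Wi - L))" "{Cv j, v} \<subseteq> e" for v
    proof -
      have "{Cv j, v} \<in> pairs {Cv j} ((Qi \<inter> Qj) \<union> (Wj \<union> (Wi - L)))"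
        using that(1) unfolding pairs_def by blast
      then have "{Cv j, v} \<in> shift m a i j P" unfolding sh by blast
      then show ?thesis using that(2) by blast
    qed
    have inK: "{Rv l, Sv y} \<in> K" if "{Rv l, Sv y} \<in> P" using that unfolding K_def by auto
    have subRS: "{Rv l, Sv y} \<subseteq> e" using lxy by auto
    show "\<exists>p\<in>shift m a i j P. p \<subseteq> e"
    proof (cases "x = i \<or> x = j")
      case False
      obtain p where p: "p \<in> P" "p \<subseteq> e" using tc e unfolding two_cover_def by blast
      then have "p \<in> K" unfolding K_def using False lxy by auto
      then show ?thesis using p memK by blast
    next
      case True
      show ?thesis
      proof (cases "x = i")
        case xi: True
        have sI: "{Cv i, v} \<subseteq> e" if "v = Rv l \<or> v = Sv y" for v using lxy xi that by auto
        obtain p where p: "p \<in> P" "p \<subseteq> {Rv l, Cv i, Sv y}" using cov lxy xi by blast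
        consider "p = {Rv l, Sv y}" | "p = {Cv i, Sv y}" | "p = {Rv l, Cv i}" using sub_cases[OF p] by blast
        then show ?thesis
        proof cases
          case 1 then show ?thesis using p inK subRS memK by blast
        next
          case 2 then have "Sv y \<in> Qi" using inQ p ci unfolding Qi_def by blast
          then show ?thesis using memI[of "Sv y"] sI by blast
        next
          case 3 then have Wi: "Rv l \<in> Wi" using inW p ci unfolding Wi_def by blast
          show ?thesis
          proof (cases "a l < j")
            case True then show ?thesis using Wi LL memI[of "Rv l"] sI by blast
          next
            case False
            then have "j \<le> a l" by simp
            then obtain q where q: "q \<in> P" "q \<subseteq> {Rv l, Cv j, Sv y}" using cov[of j] ij by auto
            consider "q = {Rv l, Sv y}" | "q = {Cv j, Sv y}" | "q = {Rv l, Cv j}" using sub_cases[OF q] by blast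
            then show ?thesis
            proof cases
              case 1 then show ?thesis using q inK subRS memK by blast
            next
              case 2 then have "Sv y \<in> Qj" using inQ q cj unfolding Qj_def by blast
              then show ?thesis using memI[of "Sv y"] sI by blast
            next
              case 3 then have "Rv l \<in> Wj" using inW q cj unfolding Wj_def by blast
              then show ?thesis using Wi memI[of "Rv l"] sI by blast
            qed
          qed
        qed
      next
        case False
        with True have xj: "x = j" by simp
        have sJ: "{Cv j, v} \<subseteq> e" if "v = Rv l \<or> v = Sv y" for v using lxy xj that by auto
        obtain p where p: "p \<in> P" "p \<subseteq> {Rv l, Cv j, Sv y}" using cov lxy xj by blast
        have nL: "Rv l \<notin> L" using LL lxy xj by simp
        consider "p = {Rv l, Sv y}" | "p = {Cv j, Sv y}" | "p = {Rv l, Cv j}" using sub_cases[OF p] by blast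
        then show ?thesis
        proof cases
          case 1 then show ?thesis using p inK subRS memK by blast
        next
          case 3 then have "Rv l \<in> Wj" using inW p cj unfolding Wj_def by blast
          then show ?thesis using memJ[of "Rv l"] sJ by blast
        next
          case 2 then have Qj: "Sv y \<in> Qj" using inQ p cj unfolding Qj_def by blast
          have "i \<le> a l" using lxy xj ij by simp
          then obtain q where q: "q \<in> P" "q \<subseteq> {Rv l, Cv i, Sv y}" using cov[of i] ij by auto
          consider "q = {Rv l, Sv y}" | "q = {Cv i, Sv y}" | "q = {Rv l, Cv i}" using sub_cases[OF q] by blast
          then show ?thesis
          proof cases
            case 1 then show ?thesis using q inK subRS memK by blast
          next
            case 2 then have "Sv y \<in> Qi" using inQ q ci unfolding Qi_def by blast
            then show ?thesis using Qj memJ[of "Sv y"] sJ by blast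
          next
            case 3 then have "Rv l \<in> Wi" using inW q ci unfolding Wi_def by blast
            then show ?thesis using nL memJ[of "Rv l"] sJ by blast
          qed
        qed
      qed
    qed
  qed
  show ?thesis using card_ok cover_ok by blast
qed

end
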